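(* Let $G$ be a bipartite graph with bipartition $(X,Y)$, $|X| = n\geq 2$, $|Y|=m$, every $x\in X$ having degree at least $\delta$. Let $(C,x)$ be a tight pair in $G$, with $C = y_1x_1y_2x_2\ldots y_\ell x_\ell y_1$ where $x_i \in X$, $y_i\in Y$. If $y_i \in N(x)$ for some $i$, then $N(x_i) \setminus V(C)$ and $N(x)\setminus V(C)$ are disjoint.
   Context: A tight pair in $G$ is a pair $(C,x)$ where $C$ is a longest cycle in $G$ and $x \in X \setminus V(C)$, chosen such that $|N(x)\cap V(C)|$ is maximum over all pairs $(C',x')$ with $C'$ a longest cycle in $G$ and $x' \in X\setminus V(C')$. ($G$ has a tight pair iff it has no cycle of length $2n$.) *)

theory Defs
  imports Main
begin

definition nbhd :: "('a \<Rightarrow> 'a \<Rightarrow> bool) \<Rightarrow> 'a \<Rightarrow> 'a set" where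
  "nbhd E v = {u. E v u}"

definition bipartite_graph :: "'a set \<Rightarrow> 'a set \<Rightarrow> ('a \<Rightarrow> 'a \<Rightarrow> bool) \<Rightarrow> bool" where
  "bipartite_graph X Y E \<longleftrightarrow> finite X \<and> finite Y \<and> X \<inter> Y = {} \<and>
     (\<forall>u v. E u v \<longleftrightarrow> E v u) \<and>
     (\<forall>u v. E u v \<longrightarrow> (u \<in> X \<and> v \<in> Y) \<or> (u \<in> Y \<and> v \<in> X))"

definition is_cycle :: "('a \<Rightarrow> 'a \<Rightarrow> bool) \<Rightarrow> 'a list \<Rightarrow> bool" where
  "is_cycle E c \<longleftrightarrow> length c \<ge> 3 \<and> distinct c \<and>
     (\<forall>i < length c. E (c ! i) (c ! ((i + 1) mod length c)))"

definition longest_cycle :: "('a \<Rightarrow> 'a \<Rightarrow> bool) \<Rightarrow> 'a list \<Rightarrow> bool" where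
  "longest_cycle E c \<longleftrightarrow> is_cycle E c \<and> (\<forall>c'. is_cycle E c' \<longrightarrow> length c' \<le> length c)"

definition tight_pair :: "'a set \<Rightarrow> ('a \<Rightarrow> 'a \<Rightarrow> bool) \<Rightarrow> 'a list \<Rightarrow> 'a \<Rightarrow> bool" where
  "tight_pair X E c x \<longleftrightarrow> longest_cycle E c \<and> x \<in> X - set c \<and>
     (\<forall>c' x'. longest_cycle E c' \<and> x' \<in> X - set c' \<longrightarrow>
        card (nbhd E x' \<inter> set c') \<le> card (nbhd E x \<inter> set c))"

end

theory Submission
  imports Defs
begin

lemma insert_cycle:
  assumes cyc: "is_cycle E c" and p: "0 < p" "p < length c"
    and ab: "a \<notin> set c" "b \<notin> set c" "a \<noteq> b"
    and e1: "E (c ! (p - 1)) a" and e2: "E a b" and e3: "E b (c ! p)"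
  shows "is_cycle E (take p c @ [a, b] @ drop p c)"
proof -
  let ?d = "take p c @ [a, b] @ drop p c"
  have len: "length ?d = length c + 2" using p by simp
  have A: "\<And>j. j < p \<Longrightarrow> ?d ! j = c ! j" using p by (simp add: nth_append)
  have B: "?d ! p = a" "?d ! (p+1) = b" using p by (simp_all add: nth_append)
  have C: "\<And>j. p + 2 \<le> j \<Longrightarrow> j < length c + 2 \<Longrightarrow> ?d ! j = c ! (j - 2)"
    using p by (simp add: nth_append)
  have ce: "\<And>i. i < length c \<Longrightarrow> E (c ! i) (c ! ((i + 1) mod length c))"
    using cyc unfolding is_cycle_def by blast
  have "\<forall>j < length ?d. E (?d ! j) (?d ! ((j + 1) mod length ?d))"
  proof (intro allI impI)
    fix j assume j: "j < length ?d"
    show "E (?d ! j) (?d ! ((j + 1) mod length ?d))"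
    proof -
      consider "j + 1 < p" | "j + 1 = p" | "j = p" | "j = p + 1" | "p + 2 \<le> j" "j + 1 < length ?d"
        | "j + 1 = length ?d" using j p len by linarith
      then show ?thesis
      proof cases
        case 1
        with len p have m: "(j + 1) mod length ?d = j + 1" by simp
        have "E (c ! j) (c ! ((j + 1) mod length c))" using ce[of j] 1 p by simp
        moreover have "(j + 1) mod length c = j + 1" using 1 p by simp
        ultimately show ?thesis using m A 1 by simp
      next
        case 2
        with len p have m: "(j + 1) mod length ?d = j + 1" by simp
        show ?thesis using m A[of j] B 2 e1 by (metis add_diff_cancel_right' less_add_one)
      next
        case 3
        with len p have m: "(j + 1) mod length ?d = j + 1" by simp
        show ?thesis using m B 3 e2 by simp
      next
        case 4
        with len p have m: "(j + 1) mod length ?d = p + 2" by simp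
        have "?d ! (p+2) = c ! p" using C[of "p+2"] p by simp
        then show ?thesis using m B 4 e3 by simp
      next
        case 5
        with len p have m: "(j + 1) mod length ?d = j + 1" by simp
        have "E (c ! (j-2)) (c ! ((j - 2 + 1) mod length c))" using ce[of "j-2"] 5 p len by simp
        moreover have "(j - 2 + 1) mod length c = j + 1 - 2" using 5 p len by simp
        ultimately show ?thesis using m C[of j] C[of "j+1"] 5 len by simp
      next
        case 6
        with len p have m: "(j + 1) mod length ?d = 0" by simp
        have "E (c ! (j-2)) (c ! ((j - 2 + 1) mod length c))" using ce[of "j-2"] 6 p len by simp
        moreover have "j - 2 + 1 = length c" using 6 p len by simp
        hence "(j - 2 + 1) mod length c = 0" by simp
        moreover have "?d ! 0 = c ! 0" using A[of 0] p by simp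
        ultimately show ?thesis using m C[of j] 6 len p by simp
      qed
    qed
  qed
  moreover have "distinct ?d"
  proof -
    have dc: "distinct c" using cyc unfolding is_cycle_def by blast
    hence "distinct (take p c @ drop p c)" by simp
    hence d1: "distinct (take p c)" "distinct (drop p c)" "set (take p c) \<inter> set (drop p c) = {}"
      by (simp_all only: distinct_append)
    have "a \<notin> set (take p c)" "a \<notin> set (drop p c)" "b \<notin> set (take p c)" "b \<notin> set (drop p c)"
      using ab in_set_takeD in_set_dropD by fast+
    then show ?thesis using d1 ab(3) by auto
  qed
  moreover have "length ?d \<ge> 3" using cyc len unfolding is_cycle_def by simp
  ultimately show ?thesis unfolding is_cycle_def by blast
qed

theorem claim1:
  fixes X Y :: "'a set" and E :: "'a \<Rightarrow> 'a \<Rightarrow> bool"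
    and n m \<delta> l i :: nat and c :: "'a list" and x :: 'a
  assumes "bipartite_graph X Y E"
    and "card X = n" and "n \<ge> 2" and "card Y = m"
    and "\<forall>v \<in> X. card (nbhd E v) \<ge> \<delta>"
    and "tight_pair X E c x"
    and "length c = 2 * l"
    and "\<forall>j < l. c ! (2 * j) \<in> Y \<and> c ! (2 * j + 1) \<in> X"
    and "i < l" and "c ! (2 * i) \<in> nbhd E x"
  shows "(nbhd E (c ! (2 * i + 1)) - set c) \<inter> (nbhd E x - set c) = {}"
proof (rule ccontr)
  assume "\<not> ?thesis"
  then obtain y where y: "E (c ! (2*i+1)) y" "E x y" "y \<notin> set c"
    unfolding nbhd_def by blast
  have bg: "\<forall>u v. E u v \<longleftrightarrow> E v u" "X \<inter> Y = {}"
    "\<forall>u v. E u v \<longrightarrow> (u \<in> X \<and> v \<in> Y) \<or> (u \<in> Y \<and> v \<in> X)"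
    using assms(1) unfolding bipartite_graph_def by blast+
  have tp: "longest_cycle E c" "x \<in> X" "x \<notin> set c" using assms(6) unfolding tight_pair_def by blast+
  have cyc: "is_cycle E c" and lng: "\<And>c'. is_cycle E c' \<Longrightarrow> length c' \<le> length c"
    using tp(1) unfolding longest_cycle_def by blast+
  have "x \<noteq> y" using y(2) bg by blast
  have e1: "E (c ! (2*i+1-1)) x" using assms(10) bg(1) unfolding nbhd_def by simp
  have e3: "E y (c ! (2*i+1))" using y(1) bg(1) by blast
  have "is_cycle E (take (2*i+1) c @ [x, y] @ drop (2*i+1) c)"
    by (rule insert_cycle[OF cyc _ _ tp(3) y(3) \<open>x \<noteq> y\<close> e1 y(2) e3]) (use assms(7,9) in auto)
  from lng[OF this] assms(7,9) show False by simp
qed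

end
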